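(* Let $x\in\operatorname{dom}f$ and assume $\inf_{t\in T}f_t(x)>-\infty$. Under (SH), for every $\varepsilon>0$, \[ \mathrm{N}_{\operatorname{dom}f}(x)=\Big[\overline{\operatorname{co}}\Big(\bigcup_{t\in T}\partial_\varepsilon f_t(x)\Big)\Big]_\infty . \]
   Context: $X$ is a real separated locally convex space with dual $X^*$ carrying the weak$^*$ topology. $T$ is a nonempty index set, $\{f_t: t\in T\}$ are proper convex lsc functions $X\to\mathbb{R}\cup\{+\infty\}$, $f:=\sup_{t\in T}f_t$. $\partial_\varepsilon g(x)=\{x^*:\ g(y)\ge g(x)+\langle x^*,y-x\rangle-\varepsilon\ \forall y\}$ if $g(x)\in\mathbb{R}$ (empty otherwise). $\overline{\operatorname{co}}$ is the weak$^*$-closed convex hull; $C_\infty$ is the recession cone of a nonempty closed convex set $C$; $\mathrm{N}_A(x)$ is the normal cone. (SH): $T$ is compact Hausdorff and $t\mapsto f_t(z)$ is upper semicontinuous on $T$ for each $z\in X$. *)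

theory Defs
  imports "HOL-Analysis.Analysis"
begin

definition separated_lcs :: "'a::{real_vector,topological_space} itself \<Rightarrow> bool" where
  "separated_lcs _ \<longleftrightarrow>
     continuous_on UNIV (\<lambda>p::'a \<times> 'a. fst p + snd p) \<and>
     continuous_on UNIV (\<lambda>p::real \<times> 'a. fst p *\<^sub>R snd p) \<and>
     (\<forall>x y::'a. x \<noteq> y \<longrightarrow> (\<exists>U V. open U \<and> open V \<and> x \<in> U \<and> y \<in> V \<and> U \<inter> V = {})) \<and>
     (\<forall>U::'a set. open U \<and> 0 \<in> U \<longrightarrow> (\<exists>V. open V \<and> convex V \<and> 0 \<in> V \<and> V \<subseteq> U))"

text \<open>Topological dual X*: continuous linear functionals; pairing is application.
X* is viewed inside 'a \<Rightarrow> real, whose (product) topology restricted to X* is the weak* topology.\<close>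
definition dual :: "('a::{real_vector,topological_space} \<Rightarrow> real) set" where
  "dual = {\<phi>. linear \<phi> \<and> continuous_on UNIV \<phi>}"

definition wstar_convex :: "('a::{real_vector,topological_space} \<Rightarrow> real) set \<Rightarrow> bool" where
  "wstar_convex C \<longleftrightarrow> (\<forall>u\<in>C. \<forall>v\<in>C. \<forall>\<theta>\<in>{0..1::real}. (\<lambda>x. \<theta> * u x + (1 - \<theta>) * v x) \<in> C)"

definition wstar_cco :: "('a::{real_vector,topological_space} \<Rightarrow> real) set \<Rightarrow> ('a \<Rightarrow> real) set" where
  "wstar_cco S = \<Inter>{C. C \<subseteq> dual \<and> S \<subseteq> C \<and> wstar_convex C \<and> closedin (subtopology euclidean dual) C}"

definition recession_cone :: "('a \<Rightarrow> real) set \<Rightarrow> ('a \<Rightarrow> real) set" where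
  "recession_cone C = {d. \<forall>c\<in>C. \<forall>s::real. s \<ge> 0 \<longrightarrow> (\<lambda>x. c x + s * d x) \<in> C}"

definition normal_cone :: "'a::{real_vector,topological_space} set \<Rightarrow> 'a \<Rightarrow> ('a \<Rightarrow> real) set" where
  "normal_cone A x = {\<phi>\<in>dual. \<forall>y\<in>A. \<phi> (y - x) \<le> 0}"

definition eps_subdiff :: "real \<Rightarrow> ('a::{real_vector,topological_space} \<Rightarrow> ereal) \<Rightarrow> 'a \<Rightarrow> ('a \<Rightarrow> real) set" where
  "eps_subdiff \<epsilon> g x =
     (if \<bar>g x\<bar> \<noteq> \<infinity> then {\<phi>\<in>dual. \<forall>y. g y \<ge> g x + ereal (\<phi> (y - x)) - ereal \<epsilon>} else {})"

definition proper_fun :: "('a \<Rightarrow> ereal) \<Rightarrow> bool" where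
  "proper_fun g \<longleftrightarrow> (\<forall>x. g x \<noteq> -\<infinity>) \<and> (\<exists>x. g x \<noteq> \<infinity>)"

definition convex_fun :: "('a::real_vector \<Rightarrow> ereal) \<Rightarrow> bool" where
  "convex_fun g \<longleftrightarrow> (\<forall>x y. \<forall>\<theta>\<in>{0..1::real}.
      g (\<theta> *\<^sub>R x + (1 - \<theta>) *\<^sub>R y) \<le> ereal \<theta> * g x + ereal (1 - \<theta>) * g y)"

definition lsc_fun :: "('a::topological_space \<Rightarrow> ereal) \<Rightarrow> bool" where
  "lsc_fun g \<longleftrightarrow> (\<forall>c::real. closed {x. g x \<le> ereal c})"

definition dom_fun :: "('a \<Rightarrow> ereal) \<Rightarrow> 'a set" where
  "dom_fun g = {x. g x < \<infinity>}"

end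

theory Submission
  imports Defs "HOL-Analysis.Finite_Function_Topology"
begin


definition sublin :: "('b::real_vector \<Rightarrow> real) \<Rightarrow> bool" where
  "sublin q \<longleftrightarrow> (\<forall>x y. q (x + y) \<le> q x + q y) \<and> (\<forall>c x. c \<ge> 0 \<longrightarrow> q (c *\<^sub>R x) = c * q x)"

definition Rfun :: "('b::real_vector \<Rightarrow> real) \<Rightarrow> 'b \<Rightarrow> real \<Rightarrow> 'b \<Rightarrow> real" where
  "Rfun p y a z = Inf ((\<lambda>t. p (z + t *\<^sub>R y) - t * a) ` {0..})"

lemma sublin_0: "sublin q \<Longrightarrow> q 0 = 0"
  unfolding sublin_def by (metis mult_zero_left order_refl scaleR_zero_left)

lemma sublin_neg: "sublin q \<Longrightarrow> - q (- x) \<le> q x"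
proof -
  assume q: "sublin q"
  have "q (x + - x) \<le> q x + q (- x)" using q unfolding sublin_def by blast
  then show ?thesis using sublin_0[OF q] by simp
qed

lemma Rfun_bdd:
  assumes "sublin p" "a \<le> p y" "t \<ge> 0"
  shows "- p (- z) \<le> p (z + t *\<^sub>R y) - t * a"
proof -
  have "p (t *\<^sub>R y) \<le> p (z + t *\<^sub>R y) + p (- z)"
  proof -
    have "p ((z + t *\<^sub>R y) + - z) \<le> p (z + t *\<^sub>R y) + p (- z)"
      using assms(1) unfolding sublin_def by blast
    then show ?thesis by simp
  qed
  moreover have "p (t *\<^sub>R y) = t * p y" using assms unfolding sublin_def by auto
  moreover have "t * a \<le> t * p y" using assms by (simp add: mult_left_mono)
  ultimately show ?thesis by linarith
qed

lemma Rfun_le: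
  assumes "sublin p" "a \<le> p y" "t \<ge> 0"
  shows "Rfun p y a z \<le> p (z + t *\<^sub>R y) - t * a"
  unfolding Rfun_def
  by (rule cInf_lower) (use assms Rfun_bdd[OF assms(1,2)] in \<open>auto intro!: bdd_belowI2\<close>)

lemma Rfun_ge:
  assumes "sublin p" "a \<le> p y" "\<And>t. t \<ge> 0 \<Longrightarrow> b \<le> p (z + t *\<^sub>R y) - t * a"
  shows "b \<le> Rfun p y a z"
  unfolding Rfun_def by (rule cInf_greatest) (use assms in auto)

lemma Rfun_props:
  assumes p: "sublin p" and a: "a \<le> p y"
  shows "sublin (Rfun p y a)" "\<And>z. Rfun p y a z \<le> p z" "Rfun p y a (- y) \<le> - a"
proof -
  note le = Rfun_le[OF p a] and ge = Rfun_ge[OF p a]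
  show "\<And>z. Rfun p y a z \<le> p z" using le[of 0] by simp
  show "Rfun p y a (- y) \<le> - a" using le[of 1 "-y"] sublin_0[OF p] by simp
  show "sublin (Rfun p y a)"
    unfolding sublin_def
  proof (intro conjI allI impI)
    fix z1 z2
    have "Rfun p y a (z1 + z2) - (p (z2 + t *\<^sub>R y) - t * a) \<le> Rfun p y a z1" if t: "t \<ge> 0" for t
    proof (rule ge)
      fix s :: real assume s: "s \<ge> 0"
      have "Rfun p y a (z1 + z2) \<le> p (z1 + z2 + (s + t) *\<^sub>R y) - (s + t) * a"
        using le s t by simp
      also have "p (z1 + z2 + (s + t) *\<^sub>R y) \<le> p (z1 + s *\<^sub>R y) + p (z2 + t *\<^sub>R y)"
      proof -
        have "p ((z1 + s *\<^sub>R y) + (z2 + t *\<^sub>R y)) \<le> p (z1 + s *\<^sub>R y) + p (z2 + t *\<^sub>R y)"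
          using p unfolding sublin_def by blast
        moreover have "(z1 + s *\<^sub>R y) + (z2 + t *\<^sub>R y) = z1 + z2 + (s + t) *\<^sub>R y"
          by (simp add: algebra_simps)
        ultimately show ?thesis by simp
      qed
      finally show "Rfun p y a (z1 + z2) - (p (z2 + t *\<^sub>R y) - t * a) \<le> p (z1 + s *\<^sub>R y) - s * a"
        by (simp add: algebra_simps)
    qed
    then have "Rfun p y a (z1 + z2) - Rfun p y a z1 \<le> Rfun p y a z2"
      by (intro ge) (auto simp: algebra_simps)
    then show "Rfun p y a (z1 + z2) \<le> Rfun p y a z1 + Rfun p y a z2" by simp
  next
    fix c :: real and z assume c: "c \<ge> 0"
    show "Rfun p y a (c *\<^sub>R z) = c * Rfun p y a z"
    proof (cases "c = 0")
      case True
      have "0 \<le> Rfun p y a 0"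
        by (rule ge) (use p a in \<open>auto simp: sublin_def mult_left_mono\<close>)
      moreover have "Rfun p y a 0 \<le> 0" using le[of 0 0] sublin_0[OF p] by simp
      ultimately show ?thesis using True by simp
    next
      case False
      then have c: "c > 0" using c by simp
      have 1: "Rfun p y a (c *\<^sub>R z) / c \<le> Rfun p y a z"
      proof (rule ge)
        fix s :: real assume s: "s \<ge> 0"
        have "Rfun p y a (c *\<^sub>R z) \<le> p (c *\<^sub>R z + (c * s) *\<^sub>R y) - (c * s) * a"
          using le c s by simp
        also have "p (c *\<^sub>R z + (c * s) *\<^sub>R y) = c * p (z + s *\<^sub>R y)"
        proof -
          have "c *\<^sub>R z + (c * s) *\<^sub>R y = c *\<^sub>R (z + s *\<^sub>R y)" by (simp add: scaleR_add_right)
          then show ?thesis using p c unfolding sublin_def by simp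
        qed
        finally show "Rfun p y a (c *\<^sub>R z) / c \<le> p (z + s *\<^sub>R y) - s * a"
          using c by (simp add: field_simps)
      qed
      have 2: "c * Rfun p y a z \<le> Rfun p y a (c *\<^sub>R z)"
      proof (rule ge)
        fix t :: real assume t: "t \<ge> 0"
        have "Rfun p y a z \<le> p (z + (t/c) *\<^sub>R y) - (t/c) * a"
          using le[of "t/c" z] c t by simp
        then have "c * Rfun p y a z \<le> c * (p (z + (t/c) *\<^sub>R y) - (t/c) * a)"
          using c by (intro mult_left_mono) auto
        also have "\<dots> = c * p (z + (t/c) *\<^sub>R y) - t * a" using c by (simp add: field_simps)
        finally have A: "c * Rfun p y a z \<le> c * p (z + (t/c) *\<^sub>R y) - t * a" .
        have B: "c * p (z + (t/c) *\<^sub>R y) = p (c *\<^sub>R z + t *\<^sub>R y)"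
        proof -
          have "c *\<^sub>R z + t *\<^sub>R y = c *\<^sub>R (z + (t/c) *\<^sub>R y)" using c by (simp add: scaleR_add_right)
          then show ?thesis using p c unfolding sublin_def by simp
        qed
        show "c * Rfun p y a z \<le> p (c *\<^sub>R z + t *\<^sub>R y) - t * a"
          using A B by linarith
      qed
      show ?thesis using 1 2 c by (simp add: field_simps)
    qed
  qed
qed



lemma epi_sub_iff: "{(x,s). q1 x \<le> (s::real)} \<subseteq> {(x,s). q2 x \<le> s} \<longleftrightarrow> (\<forall>x. q2 x \<le> q1 x)"
  by (auto intro: order_trans)

lemma sublin_lower: "sublin r \<Longrightarrow> (\<forall>x. r x \<le> p x) \<Longrightarrow> - p (- z) \<le> r z"
  using sublin_neg[of r z] by (metis neg_le_iff_le order_trans)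

lemma exists_linear_below:
  fixes p :: "'b::real_vector \<Rightarrow> real"
  assumes p: "sublin p" and y0: "1 \<le> p y0"
  shows "\<exists>L. linear L \<and> (\<forall>x. L x \<le> p x) \<and> 1 \<le> L y0"
proof -
  define F where "F = {q. sublin q \<and> (\<forall>x. q x \<le> p x) \<and> q (- y0) \<le> -1}"
  define epi :: "('b \<Rightarrow> real) \<Rightarrow> ('b \<times> real) set" where "epi q = {(x,s). q x \<le> s}" for q
  define A where "A = epi ` F"
  have q0: "Rfun p y0 1 \<in> F"
    using Rfun_props[OF p y0] unfolding F_def by auto
  have "\<forall>C\<in>chains A. \<exists>U\<in>A. \<forall>X\<in>C. X \<subseteq> U"
  proof
    fix C assume C: "C \<in> chains A"
    show "\<exists>U\<in>A. \<forall>X\<in>C. X \<subseteq> U"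
    proof (cases "C = {}")
      case True then show ?thesis using q0 unfolding A_def by auto
    next
      case False
      define Ch where "Ch = {r\<in>F. epi r \<in> C}"
      have CA: "C \<subseteq> A" and chn: "\<And>X Y. X \<in> C \<Longrightarrow> Y \<in> C \<Longrightarrow> X \<subseteq> Y \<or> Y \<subseteq> X"
        using C unfolding chains_def chain_subset_def by auto
      have Chne: "Ch \<noteq> {}" using False CA unfolding Ch_def A_def by auto
      have comp: "(\<forall>x. r1 x \<le> r2 x) \<or> (\<forall>x. r2 x \<le> r1 x)" if "r1 \<in> Ch" "r2 \<in> Ch" for r1 r2
        using chn[of "epi r1" "epi r2"] that unfolding Ch_def epi_def epi_sub_iff by auto
      have rF: "sublin r" "\<And>x. r x \<le> p x" "r (- y0) \<le> -1" if "r \<in> Ch" for r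
        using that unfolding Ch_def F_def by auto
      define m where "m z = Inf ((\<lambda>r. r z) ` Ch)" for z
      have bdd: "bdd_below ((\<lambda>r. r z) ` Ch)" for z
        by (rule bdd_belowI2[of _ "- p (- z)"]) (use rF sublin_lower in blast)
      have mle: "m z \<le> r z" if "r \<in> Ch" for r z
        unfolding m_def by (rule cInf_lower) (use that bdd in auto)
      have mge: "b \<le> m z" if "\<And>r. r \<in> Ch \<Longrightarrow> b \<le> r z" for b z
        unfolding m_def by (rule cInf_greatest) (use that Chne in auto)
      have msub: "sublin m"
        unfolding sublin_def
      proof (intro conjI allI impI)
        fix x y
        have "m (x + y) \<le> r1 x + r2 y" if "r1 \<in> Ch" "r2 \<in> Ch" for r1 r2
        proof -
          from comp[OF that] show ?thesis
          proof
            assume le: "\<forall>x. r1 x \<le> r2 x"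
            have "m (x + y) \<le> r1 (x + y)" using mle that by blast
            also have "\<dots> \<le> r1 x + r1 y" using rF(1)[OF that(1)] unfolding sublin_def by blast
            finally show ?thesis using le by (smt (verit))
          next
            assume le: "\<forall>x. r2 x \<le> r1 x"
            have "m (x + y) \<le> r2 (x + y)" using mle that by blast
            also have "\<dots> \<le> r2 x + r2 y" using rF(1)[OF that(2)] unfolding sublin_def by blast
            finally show ?thesis using le by (smt (verit))
          qed
        qed
        then have "m (x + y) - r2 y \<le> m x" if "r2 \<in> Ch" for r2
          using that by (intro mge) (smt (verit))
        then have "m (x + y) - m x \<le> m y"
          by (intro mge) (smt (verit))
        then show "m (x + y) \<le> m x + m y" by simp
      next
        fix c :: real and z assume c: "c \<ge> 0"
        show "m (c *\<^sub>R z) = c * m z"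
        proof (cases "c = 0")
          case True
          have "m 0 = 0"
          proof (rule antisym)
            obtain r where r: "r \<in> Ch" using Chne by auto
            show "m 0 \<le> 0" using mle[OF r, of 0] sublin_0[OF rF(1)[OF r]] by simp
            show "0 \<le> m 0" by (rule mge) (metis rF(1) sublin_0 order_refl)
          qed
          then show ?thesis using True by simp
        next
          case False
          then have c: "c > 0" using c by simp
          have hom: "r (c *\<^sub>R z) = c * r z" if "r \<in> Ch" for r
            using rF(1)[OF that] c unfolding sublin_def by simp
          have "m (c *\<^sub>R z) / c \<le> m z"
            by (rule mge) (use mle hom c in \<open>auto simp: divide_le_eq mult.commute\<close>)
          moreover have "c * m z \<le> m (c *\<^sub>R z)"
          proof (rule mge)
            fix r assume r: "r \<in> Ch"
            have "c * m z \<le> c * r z" using mle[OF r] c by (intro mult_left_mono) auto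
            then show "c * m z \<le> r (c *\<^sub>R z)" using hom[OF r] by simp
          qed
          ultimately show ?thesis using c by (simp add: field_simps)
        qed
      qed
      have mF: "m \<in> F"
      proof -
        obtain r where r: "r \<in> Ch" using Chne by auto
        have "m x \<le> p x" for x using mle[OF r, of x] rF(2)[OF r, of x] by simp
        moreover have "m (- y0) \<le> -1" using mle[OF r, of "- y0"] rF(3)[OF r] by simp
        ultimately show ?thesis using msub unfolding F_def by auto
      qed
      show ?thesis
      proof (intro bexI ballI)
        show "epi m \<in> A" using mF unfolding A_def by auto
        fix X assume X: "X \<in> C"
        then obtain r where "r \<in> F" "X = epi r" using CA unfolding A_def by auto
        then have "r \<in> Ch" "X = epi r" using X unfolding Ch_def by auto
        then show "X \<subseteq> epi m" unfolding epi_def epi_sub_iff using mle by (auto intro: order_trans)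
      qed
    qed
  qed
  from Zorn_Lemma2[OF this] obtain M where M: "M \<in> A" "\<And>X. X \<in> A \<Longrightarrow> M \<subseteq> X \<Longrightarrow> X = M"
    by blast
  then obtain q where qF: "q \<in> F" and Mq: "M = epi q" unfolding A_def by auto
  have qs: "sublin q" and qp: "\<And>x. q x \<le> p x" and qy: "q (- y0) \<le> -1" using qF unfolding F_def by auto
  have neg: "q (- x) = - q x" for x
  proof -
    define r where "r = Rfun q x (q x)"
    note rp = Rfun_props[OF qs, of "q x" x, folded r_def]
    have "r \<in> F"
      unfolding F_def using rp qp qy by (auto intro: order_trans)
    moreover have "M \<subseteq> epi r" unfolding Mq epi_def epi_sub_iff using rp by auto
    ultimately have "epi r = epi q" using M(2) Mq unfolding A_def by auto
    then have "q z \<le> r z" for z unfolding epi_def using epi_sub_iff[of r q] by auto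
    then have "q (- x) \<le> - q x" using rp(3) order_trans by blast
    moreover have "- q x \<le> q (- x)" using sublin_neg[OF qs, of "- x"] by simp
    ultimately show ?thesis by simp
  qed
  have add: "q (x + y) = q x + q y" for x y
  proof -
    have "q (x + y) \<le> q x + q y" using qs unfolding sublin_def by blast
    moreover have "q (- x + - y) \<le> q (- x) + q (- y)" using qs unfolding sublin_def by blast
    then have "- q (x + y) \<le> - q x - q y" using neg[of "x + y"] neg[of x] neg[of y] by (simp add: add.commute)
    ultimately show ?thesis by simp
  qed
  have sc: "q (c *\<^sub>R x) = c * q x" for c x
  proof (cases "c \<ge> 0")
    case True then show ?thesis using qs unfolding sublin_def by blast
  next
    case False
    then have "q ((- c) *\<^sub>R x) = (- c) * q x" using qs unfolding sublin_def by (meson le_minus_iff linear neg_0_le_iff_le)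
    then show ?thesis using neg[of "(- c) *\<^sub>R x"] by simp
  qed
  have "linear q" by (rule linearI) (use add sc in auto)
  moreover have "1 \<le> q y0" using neg[of y0] qy by simp
  ultimately show ?thesis using qp by blast
qed



definition tvs :: "'b::{real_vector,topological_space} itself \<Rightarrow> bool" where
  "tvs _ \<longleftrightarrow>
     continuous_on UNIV (\<lambda>p::'b \<times> 'b. fst p + snd p) \<and>
     continuous_on UNIV (\<lambda>p::real \<times> 'b. fst p *\<^sub>R snd p) \<and>
     (\<forall>U::'b set. open U \<and> 0 \<in> U \<longrightarrow> (\<exists>V. open V \<and> convex V \<and> 0 \<in> V \<and> V \<subseteq> U))"

lemma open_vimage_UNIV: "continuous_on UNIV f \<Longrightarrow> open S \<Longrightarrow> open (f -` S)"
  using continuous_on_open_vimage[of UNIV f] by auto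

lemma tvs_add_const:
  assumes "tvs TYPE('b::{real_vector,topological_space})"
  shows "continuous_on UNIV (\<lambda>x::'b. a + x)"
proof -
  have c: "continuous_on UNIV (\<lambda>p::'b \<times> 'b. fst p + snd p)" using assms unfolding tvs_def by blast
  have "continuous_on UNIV ((\<lambda>p::'b \<times> 'b. fst p + snd p) \<circ> (\<lambda>x. (a, x)))"
    by (rule continuous_on_compose) (auto intro!: continuous_intros continuous_on_subset[OF c])
  then show ?thesis by (simp add: o_def)
qed

lemma tvs_scale_const:
  assumes "tvs TYPE('b::{real_vector,topological_space})"
  shows "continuous_on UNIV (\<lambda>x::'b. c *\<^sub>R x)"
proof -
  have s: "continuous_on UNIV (\<lambda>p::real \<times> 'b. fst p *\<^sub>R snd p)" using assms unfolding tvs_def by blast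
  have "continuous_on UNIV ((\<lambda>p::real \<times> 'b. fst p *\<^sub>R snd p) \<circ> (\<lambda>x. (c, x)))"
    by (rule continuous_on_compose) (auto intro!: continuous_intros continuous_on_subset[OF s])
  then show ?thesis by (simp add: o_def)
qed

lemma tvs_scale_var:
  assumes "tvs TYPE('b::{real_vector,topological_space})"
  shows "continuous_on UNIV (\<lambda>s::real. s *\<^sub>R (x::'b))"
proof -
  have s: "continuous_on UNIV (\<lambda>p::real \<times> 'b. fst p *\<^sub>R snd p)" using assms unfolding tvs_def by blast
  have "continuous_on UNIV ((\<lambda>p::real \<times> 'b. fst p *\<^sub>R snd p) \<circ> (\<lambda>s. (s, x)))"
    by (rule continuous_on_compose) (auto intro!: continuous_intros continuous_on_subset[OF s])
  then show ?thesis by (simp add: o_def)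
qed

lemma tvs_absorb:
  assumes "tvs TYPE('b::{real_vector,topological_space})" "open (V::'b set)" "0 \<in> V"
  shows "\<exists>s>0. s *\<^sub>R x \<in> V"
proof -
  have "open ((\<lambda>s::real. s *\<^sub>R x) -` V)" by (rule open_vimage_UNIV[OF tvs_scale_var[OF assms(1)] assms(2)])
  moreover have "0 \<in> (\<lambda>s::real. s *\<^sub>R x) -` V" using assms by simp
  ultimately obtain e where e: "e > 0" "ball 0 e \<subseteq> (\<lambda>s::real. s *\<^sub>R x) -` V"
    by (meson open_contains_ball)
  moreover have "e/2 \<in> ball 0 e" using e by (simp add: dist_real_def)
  ultimately have "(e/2) *\<^sub>R x \<in> V" by blast
  then show ?thesis using e by (intro exI[of _ "e/2"]) auto
qed

definition mgauge :: "'b::real_vector set \<Rightarrow> 'b \<Rightarrow> real" where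
  "mgauge U x = Inf {t. 0 < t \<and> (1/t) *\<^sub>R x \<in> U}"

lemma mgauge_props:
  assumes tvs: "tvs TYPE('b::{real_vector,topological_space})" and U: "open (U::'b set)" "convex U" "0 \<in> U"
  shows "sublin (mgauge U)" "\<And>u. u \<in> U \<Longrightarrow> mgauge U u \<le> 1" "\<And>y. y \<notin> U \<Longrightarrow> 1 \<le> mgauge U y"
proof -
  define S where "S x = {t. 0 < t \<and> (1/t) *\<^sub>R x \<in> U}" for x
  have g: "mgauge U x = Inf (S x)" for x unfolding mgauge_def S_def by simp
  have ne: "S x \<noteq> {}" for x
  proof -
    obtain s where "s > 0" "s *\<^sub>R x \<in> U" using tvs_absorb[OF tvs U(1,3)] by blast
    then have "1/s \<in> S x" unfolding S_def by auto
    then show ?thesis by auto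
  qed
  have bdd: "bdd_below (S x)" for x by (rule bdd_belowI[of _ 0]) (auto simp: S_def)
  have low: "mgauge U x \<le> t" if "t \<in> S x" for x t unfolding g by (rule cInf_lower[OF that bdd])
  have grt: "b \<le> mgauge U x" if "\<And>t. t \<in> S x \<Longrightarrow> b \<le> t" for b x unfolding g by (rule cInf_greatest[OF ne that])
  have comb: "(1/(s+t)) *\<^sub>R (x + y) \<in> U" if "s \<in> S x" "t \<in> S y" for s t x y
  proof -
    have st: "s > 0" "t > 0" "(1/s) *\<^sub>R x \<in> U" "(1/t) *\<^sub>R y \<in> U" using that unfolding S_def by auto
    have e1: "s/(s+t) \<ge> 0" "t/(s+t) \<ge> 0" "s/(s+t) + t/(s+t) = 1"
      using st by (auto simp: add_divide_distrib[symmetric])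
    have "(s/(s+t)) *\<^sub>R ((1/s) *\<^sub>R x) + (t/(s+t)) *\<^sub>R ((1/t) *\<^sub>R y) \<in> U"
      using U(2) st(3,4) e1 unfolding convex_def by blast
    moreover have "(s/(s+t)) *\<^sub>R ((1/s) *\<^sub>R x) + (t/(s+t)) *\<^sub>R ((1/t) *\<^sub>R y) = (1/(s+t)) *\<^sub>R (x + y)"
      using st by (simp add: scaleR_add_right)
    ultimately show ?thesis by simp
  qed
  show "sublin (mgauge U)"
    unfolding sublin_def
  proof (intro conjI allI impI)
    fix x y
    have "mgauge U (x + y) \<le> s + t" if "s \<in> S x" "t \<in> S y" for s t
      using low comb[OF that] that unfolding S_def by (simp add: add_pos_pos)
    then have "mgauge U (x + y) - t \<le> mgauge U x" if "t \<in> S y" for t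
      using that by (intro grt) force
    then have "mgauge U (x + y) - mgauge U x \<le> mgauge U y" by (intro grt) force
    then show "mgauge U (x + y) \<le> mgauge U x + mgauge U y" by simp
  next
    fix c :: real and x assume c: "c \<ge> 0"
    show "mgauge U (c *\<^sub>R x) = c * mgauge U x"
    proof (cases "c = 0")
      case True
      have S0: "S 0 = {0<..}" using U(3) unfolding S_def by auto
      have "mgauge U 0 = 0"
      proof (rule antisym)
        show "0 \<le> mgauge U 0" by (rule grt) (auto simp: S0)
        show "mgauge U 0 \<le> 0"
        proof (rule ccontr)
          assume "\<not> mgauge U 0 \<le> 0"
          then have "mgauge U 0 \<le> mgauge U 0 / 2" by (intro low) (auto simp: S0)
          then show False using \<open>\<not> mgauge U 0 \<le> 0\<close> by simp
        qed
      qed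
      then show ?thesis using True by simp
    next
      case False
      then have c: "c > 0" using c by simp
      have "mgauge U (c *\<^sub>R x) / c \<le> mgauge U x"
      proof (rule grt)
        fix t assume t: "t \<in> S x"
        then have "c * t \<in> S (c *\<^sub>R x)" using c unfolding S_def by auto
        then have "mgauge U (c *\<^sub>R x) \<le> c * t" by (rule low)
        then show "mgauge U (c *\<^sub>R x) / c \<le> t" using c by (simp add: divide_le_eq mult.commute)
      qed
      moreover have "c * mgauge U x \<le> mgauge U (c *\<^sub>R x)"
      proof (rule grt)
        fix t assume t: "t \<in> S (c *\<^sub>R x)"
        then have "t / c \<in> S x" using c unfolding S_def by auto
        then have "mgauge U x \<le> t / c" by (rule low)
        then show "c * mgauge U x \<le> t" using c by (simp add: le_divide_eq mult.commute)
      qed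
      ultimately show ?thesis using c by (simp add: field_simps)
    qed
  qed
  show "mgauge U u \<le> 1" if "u \<in> U" for u using low[of 1 u] that unfolding S_def by simp
  show "1 \<le> mgauge U y" if y: "y \<notin> U" for y
  proof (rule ccontr)
    assume "\<not> 1 \<le> mgauge U y"
    then have "Inf (S y) < 1" using g by simp
    then obtain t where t: "t \<in> S y" "t < 1" using cInf_less_iff[OF ne bdd] by blast
    then have t0: "t > 0" "(1/t) *\<^sub>R y \<in> U" unfolding S_def by auto
    have "t \<ge> 0" "1 - t \<ge> 0" "t + (1 - t) = 1" using t0 t by auto
    then have "t *\<^sub>R ((1/t) *\<^sub>R y) + (1 - t) *\<^sub>R 0 \<in> U"
      using U(2) t0(2) U(3) unfolding convex_def by blast
    then have "y \<in> U" using t0 by simp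
    then show False using y by simp
  qed
qed



lemma tvs_separation:
  fixes K G :: "'b::{real_vector,topological_space} set"
  assumes tvs: "tvs TYPE('b)" and K: "convex K" and G: "open G" "p \<in> G" "G \<inter> K = {}"
  shows "\<exists>L::'b \<Rightarrow> real. linear L \<and> continuous_on UNIV L \<and> (\<exists>\<delta>>0. \<forall>k\<in>K. L k + \<delta> \<le> L p)"
proof (cases "K = {}")
  case True
  have "linear (\<lambda>x::'b. 0::real)" by (rule linearI) auto
  moreover have "continuous_on UNIV (\<lambda>x::'b. 0::real)" by simp
  moreover have "\<exists>\<delta>>0. \<forall>k\<in>K. (0::real) + \<delta> \<le> 0" using True by (intro exI[of _ "1::real"]) simp
  ultimately show ?thesis by blast
next
  case False
  then obtain k0 where k0: "k0 \<in> K" by auto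
  have cu: "continuous_on UNIV (uminus::'b \<Rightarrow> 'b)" using tvs_scale_const[OF tvs, of "-1"] by simp
  have contsub: "continuous_on UNIV (\<lambda>v::'b. p - v)"
  proof -
    have "continuous_on UNIV ((\<lambda>x. p + x) \<circ> (uminus::'b \<Rightarrow> 'b))"
      by (rule continuous_on_compose) (auto intro: continuous_on_subset[OF tvs_add_const[OF tvs]] cu)
    then show ?thesis by (simp add: o_def)
  qed
  have "open ((\<lambda>v. p - v) -` G)" by (rule open_vimage_UNIV[OF contsub G(1)])
  moreover have "0 \<in> (\<lambda>v. p - v) -` G" using G by simp
  ultimately obtain V where V: "open V" "convex V" "0 \<in> V" "V \<subseteq> (\<lambda>v. p - v) -` G"
    using tvs unfolding tvs_def by meson
  define U where "U = (\<Union>k\<in>K. (\<lambda>u. (k0 - k) + u) -` V)"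
  have Uo: "open U" unfolding U_def
    by (intro open_UN ballI open_vimage_UNIV[OF tvs_add_const[OF tvs] V(1)])
  have Umem: "u \<in> U \<longleftrightarrow> (\<exists>k\<in>K. \<exists>v\<in>V. u = k - k0 + v)" for u
  proof
    assume "u \<in> U"
    then obtain k where k: "k \<in> K" "k0 - k + u \<in> V" unfolding U_def by auto
    have "u = k - k0 + (k0 - k + u)" by (simp add: algebra_simps)
    then show "\<exists>k\<in>K. \<exists>v\<in>V. u = k - k0 + v" using k by blast
  next
    assume "\<exists>k\<in>K. \<exists>v\<in>V. u = k - k0 + v"
    then obtain k v where kv: "k \<in> K" "v \<in> V" "u = k - k0 + v" by blast
    then have "k0 - k + u = v" by (simp add: algebra_simps)
    then have "u \<in> (\<lambda>u. (k0 - k) + u) -` V" using kv by simp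
    then show "u \<in> U" using kv(1) unfolding U_def by blast
  qed
  have U0: "0 \<in> U" unfolding Umem using k0 V(3) by (intro bexI[of _ k0] bexI[of _ 0]) auto
  have Uc: "convex U"
    unfolding convex_def
  proof (intro ballI allI impI)
    fix x y :: 'b and a b :: real
    assume xy: "x \<in> U" "y \<in> U" and ab: "0 \<le> a" "0 \<le> b" "a + b = 1"
    obtain k1 v1 where 1: "k1 \<in> K" "v1 \<in> V" "x = k1 - k0 + v1" using Umem xy(1) by blast
    obtain k2 v2 where 2: "k2 \<in> K" "v2 \<in> V" "y = k2 - k0 + v2" using Umem xy(2) by blast
    have "a *\<^sub>R k1 + b *\<^sub>R k2 \<in> K" using K 1 2 ab unfolding convex_def by blast
    moreover have "a *\<^sub>R v1 + b *\<^sub>R v2 \<in> V" using V(2) 1 2 ab unfolding convex_def by blast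
    moreover have "a *\<^sub>R x + b *\<^sub>R y = (a *\<^sub>R k1 + b *\<^sub>R k2) - k0 + (a *\<^sub>R v1 + b *\<^sub>R v2)"
    proof -
      have "a *\<^sub>R x + b *\<^sub>R y = a *\<^sub>R (k1 - k0 + v1) + b *\<^sub>R (k2 - k0 + v2)"
        by (simp only: 1(3) 2(3))
      also have "\<dots> = (a *\<^sub>R k1 + b *\<^sub>R k2) - (a + b) *\<^sub>R k0 + (a *\<^sub>R v1 + b *\<^sub>R v2)"
        by (simp add: algebra_simps)
      finally have "a *\<^sub>R x + b *\<^sub>R y = (a *\<^sub>R k1 + b *\<^sub>R k2) - (a + b) *\<^sub>R k0 + (a *\<^sub>R v1 + b *\<^sub>R v2)" .
      then show ?thesis using ab by simp
    qed
    ultimately show "a *\<^sub>R x + b *\<^sub>R y \<in> U" using Umem by blast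
  qed
  define y0 where "y0 = p - k0"
  have y0U: "y0 \<notin> U"
  proof
    assume "y0 \<in> U"
    then obtain k v where kv: "k \<in> K" "v \<in> V" "p - k0 = k - k0 + v" using Umem y0_def by blast
    then have "p - v = k" by (simp add: algebra_simps)
    then have "k \<in> G" using V(4) kv(2) by auto
    then show False using G(3) kv(1) by auto
  qed
  note gp = mgauge_props[OF tvs Uo Uc U0]
  obtain L where L: "linear L" "\<And>x. L x \<le> mgauge U x" "1 \<le> L y0"
    using exists_linear_below[OF gp(1) gp(3)[OF y0U]] by blast
  have LU: "L u \<le> 1" if "u \<in> U" for u using L(2)[of u] gp(2)[OF that] by simp
  define W where "W = U \<inter> uminus -` U"
  have Wo: "open W"
  proof -
    have "open ((uminus::'b \<Rightarrow> 'b) -` U)" by (rule open_vimage_UNIV[OF cu Uo])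
    then show ?thesis unfolding W_def using Uo by (simp add: open_Int)
  qed
  have W0: "0 \<in> W" using U0 unfolding W_def by simp
  have LW: "\<bar>L w\<bar> \<le> 1" if "w \<in> W" for w
  proof -
    have "L w \<le> 1" "L (- w) \<le> 1" using LU that unfolding W_def by auto
    moreover have "L (- w) = - L w" using L(1) by (simp add: linear_neg)
    ultimately show ?thesis by simp
  qed
  have cont: "continuous_on UNIV L"
  proof -
    have "open (L -` B)" if B: "open B" for B
    proof (subst open_subopen, intro ballI)
      fix x assume x: "x \<in> L -` B"
      then obtain e where e: "e > 0" "ball (L x) e \<subseteq> B" using B by (meson open_contains_ball vimageE)
      define N where "N = (\<lambda>y. (2/e) *\<^sub>R ((- x) + y)) -` W"
      have contN: "continuous_on UNIV (\<lambda>y. (2/e) *\<^sub>R ((- x) + y))"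
      proof -
        have "continuous_on UNIV ((\<lambda>y. (2/e) *\<^sub>R y) \<circ> (\<lambda>y. (- x) + y))"
          by (rule continuous_on_compose[OF tvs_add_const[OF tvs, of "- x"]]) (rule continuous_on_subset[OF tvs_scale_const[OF tvs]], simp)
        then show ?thesis by (simp add: o_def)
      qed
      have "open N" unfolding N_def by (rule open_vimage_UNIV[OF contN Wo])
      moreover have "x \<in> N" unfolding N_def using W0 by simp
      moreover have "N \<subseteq> L -` B"
      proof
        fix y assume "y \<in> N"
        then have "\<bar>L ((2/e) *\<^sub>R ((- x) + y))\<bar> \<le> 1" using LW unfolding N_def by auto
        moreover have "L ((2/e) *\<^sub>R ((- x) + y)) = (2/e) * (L y - L x)"
          using L(1) by (simp add: linear_scale linear_add linear_neg linear_diff diff_divide_distrib)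
        ultimately have "\<bar>L y - L x\<bar> \<le> e/2" using e(1)
          by (simp add: abs_mult divide_le_eq mult.commute) (smt (verit))
        then have "L y \<in> ball (L x) e" using e(1) by (simp add: dist_real_def abs_minus_commute)
        then show "y \<in> L -` B" using e(2) by auto
      qed
      ultimately show "\<exists>T. open T \<and> x \<in> T \<and> T \<subseteq> L -` B" by blast
    qed
    then show ?thesis using continuous_on_open_vimage[of UNIV L] by auto
  qed
  obtain s where s: "s > 0" "s *\<^sub>R y0 \<in> V" using tvs_absorb[OF tvs V(1) V(3)] by blast
  have "L k + s \<le> L p" if k: "k \<in> K" for k
  proof -
    have "k - k0 + s *\<^sub>R y0 \<in> U" using Umem k s(2) by blast
    then have "L (k - k0 + s *\<^sub>R y0) \<le> 1" by (rule LU)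
    moreover have "L (k - k0 + s *\<^sub>R y0) = L k - L k0 + s * L y0"
      using L(1) by (simp add: linear_add linear_diff linear_scale)
    moreover have "L y0 = L p - L k0" using L(1) y0_def by (simp add: linear_diff)
    moreover have "s \<le> s * L y0" using s(1) L(3) by simp
    ultimately show ?thesis using L(3) by (smt (verit, best) mult_left_mono s(1))
  qed
  then show ?thesis using L(1) cont s(1) by blast
qed



lemma tvs_from_lcs: "separated_lcs TYPE('a::{real_vector,topological_space}) \<Longrightarrow> tvs TYPE('a)"
  unfolding separated_lcs_def tvs_def by blast

lemma tvs_normed: "tvs TYPE('b::real_normed_vector)"
  unfolding tvs_def
proof (intro conjI allI impI)
  show "continuous_on UNIV (\<lambda>p::'b \<times> 'b. fst p + snd p)" by (intro continuous_intros)
  show "continuous_on UNIV (\<lambda>p::real \<times> 'b. fst p *\<^sub>R snd p)" by (intro continuous_intros)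
  fix U :: "'b set" assume "open U \<and> 0 \<in> U"
  then obtain e where "e > 0" "ball 0 e \<subseteq> U" by (meson open_contains_ball)
  then show "\<exists>V. open V \<and> convex V \<and> 0 \<in> V \<and> V \<subseteq> U"
    by (intro exI[of _ "ball 0 e"]) auto
qed

lemma tvs_prod:
  assumes tvs: "tvs TYPE('a::{real_vector,topological_space})"
  shows "tvs TYPE('a \<times> real)"
  unfolding tvs_def
proof (intro conjI allI impI)
  have add: "continuous_on UNIV (\<lambda>p::'a \<times> 'a. fst p + snd p)"
    and sc: "continuous_on UNIV (\<lambda>p::real \<times> 'a. fst p *\<^sub>R snd p)"
    using tvs unfolding tvs_def by blast+
  have c1: "continuous_on UNIV ((\<lambda>q::'a \<times> 'a. fst q + snd q) \<circ> (\<lambda>p::('a \<times> real) \<times> ('a \<times> real). (fst (fst p), fst (snd p))))"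
    by (rule continuous_on_compose) (auto intro!: continuous_intros intro: continuous_on_subset[OF add])
  have c2: "continuous_on UNIV (\<lambda>p::('a \<times> real) \<times> ('a \<times> real). snd (fst p) + snd (snd p))"
    by (intro continuous_intros)
  have cc: "continuous_on UNIV (\<lambda>p::('a \<times> real) \<times> ('a \<times> real). (fst (fst p) + fst (snd p), snd (fst p) + snd (snd p)))"
    using continuous_on_Pair[OF c1 c2] by (simp add: o_def)
  have eq: "(\<lambda>p::('a \<times> real) \<times> ('a \<times> real). fst p + snd p) = (\<lambda>p. (fst (fst p) + fst (snd p), snd (fst p) + snd (snd p)))"
    by (auto simp: fun_eq_iff prod_eq_iff)
  show "continuous_on UNIV (\<lambda>p::('a \<times> real) \<times> ('a \<times> real). fst p + snd p)" unfolding eq by (rule cc)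
  have d1: "continuous_on UNIV ((\<lambda>q::real \<times> 'a. fst q *\<^sub>R snd q) \<circ> (\<lambda>p::real \<times> ('a \<times> real). (fst p, fst (snd p))))"
    by (rule continuous_on_compose) (auto intro!: continuous_intros intro: continuous_on_subset[OF sc])
  have d2: "continuous_on UNIV (\<lambda>p::real \<times> ('a \<times> real). fst p * snd (snd p))"
    by (intro continuous_intros)
  have dd: "continuous_on UNIV (\<lambda>p::real \<times> ('a \<times> real). (fst p *\<^sub>R fst (snd p), fst p * snd (snd p)))"
    using continuous_on_Pair[OF d1 d2] by (simp add: o_def)
  have eq2: "(\<lambda>p::real \<times> ('a \<times> real). fst p *\<^sub>R snd p) = (\<lambda>p. (fst p *\<^sub>R fst (snd p), fst p * snd (snd p)))"
    by (auto simp: fun_eq_iff prod_eq_iff)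
  show "continuous_on UNIV (\<lambda>p::real \<times> ('a \<times> real). fst p *\<^sub>R snd p)" unfolding eq2 by (rule dd)
next
  fix U :: "('a \<times> real) set" assume U: "open U \<and> 0 \<in> U"
  have "(0::'a, 0::real) \<in> U" using U by (simp add: zero_prod_def)
  then obtain A B where AB0: "open A" "open B" "(0::'a, 0::real) \<in> A \<times> B" "A \<times> B \<subseteq> U"
    using U open_prod_elim by metis
  then have AB: "open A" "open B" "0 \<in> A" "0 \<in> B" "A \<times> B \<subseteq> U" by auto
  then obtain V where V: "open V" "convex V" "0 \<in> V" "V \<subseteq> A" using tvs unfolding tvs_def by meson
  obtain e where e: "e > 0" "ball 0 e \<subseteq> B" using AB by (meson open_contains_ball)
  show "\<exists>V. open V \<and> convex V \<and> 0 \<in> V \<and> V \<subseteq> U"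
  proof (intro exI[of _ "V \<times> ball (0::real) e"] conjI)
    show "open (V \<times> ball (0::real) e)" using V by (simp add: open_Times)
    show "convex (V \<times> ball (0::real) e)" by (intro convex_Times V(2) convex_ball)
    show "0 \<in> V \<times> ball (0::real) e" using V e by (simp add: zero_prod_def)
    show "V \<times> ball (0::real) e \<subseteq> U" using V e AB by auto
  qed
qed



lemma epi_closed:
  fixes g :: "'a::topological_space \<Rightarrow> ereal"
  assumes "lsc_fun g"
  shows "closed {(y, r::real). g y \<le> ereal r}"
  unfolding closed_def
proof (subst open_subopen, intro ballI)
  fix p assume "p \<in> - {(y, r::real). g y \<le> ereal r}"
  then obtain y r where p: "p = (y, r)" "ereal r < g y" by (cases p) auto
  then obtain c where c: "ereal r < ereal c" "ereal c < g y" using ereal_dense2 by blast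
  have "open (- {y. g y \<le> ereal c})" using assms unfolding lsc_fun_def by auto
  then have "open ((- {y. g y \<le> ereal c}) \<times> {..<c})" by (intro open_Times) auto
  moreover have "p \<in> (- {y. g y \<le> ereal c}) \<times> {..<c}" using p c by auto
  moreover have "(- {y. g y \<le> ereal c}) \<times> {..<c} \<subseteq> - {(y, r::real). g y \<le> ereal r}"
  proof
    fix q assume "q \<in> (- {y. g y \<le> ereal c}) \<times> {..<c}"
    then obtain y' r' where yr: "q = (y', r')" "ereal c < g y'" "r' < c" by force
    then have "ereal r' < ereal c" by simp
    then have "ereal r' < g y'" using yr(2) by (rule less_trans)
    then show "q \<in> - {(y, r::real). g y \<le> ereal r}" using yr(1) by auto
  qed
  ultimately show "\<exists>T. open T \<and> p \<in> T \<and> T \<subseteq> - {(y, r::real). g y \<le> ereal r}" by blast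
qed

lemma epi_convex:
  fixes g :: "'a::real_vector \<Rightarrow> ereal"
  assumes "convex_fun g"
  shows "convex {(y, r::real). g y \<le> ereal r}"
  unfolding convex_def
proof (intro ballI allI impI)
  fix p q :: "'a \<times> real" and a b :: real
  assume pq: "p \<in> {(y, r). g y \<le> ereal r}" "q \<in> {(y, r). g y \<le> ereal r}" and ab: "0 \<le> a" "0 \<le> b" "a + b = 1"
  obtain y1 r1 where 1: "p = (y1, r1)" "g y1 \<le> ereal r1" using pq(1) by auto
  obtain y2 r2 where 2: "q = (y2, r2)" "g y2 \<le> ereal r2" using pq(2) by auto
  have b: "b = 1 - a" using ab by simp
  have "g (a *\<^sub>R y1 + (1 - a) *\<^sub>R y2) \<le> ereal a * g y1 + ereal (1 - a) * g y2"
    using assms ab b unfolding convex_fun_def by auto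
  also have "\<dots> \<le> ereal a * ereal r1 + ereal (1 - a) * ereal r2"
    using 1 2 ab b by (intro add_mono ereal_mult_left_mono) auto
  also have "\<dots> = ereal (a * r1 + (1 - a) * r2)" by simp
  finally show "a *\<^sub>R p + b *\<^sub>R q \<in> {(y, r). g y \<le> ereal r}" using 1 2 b by simp
qed

lemma seg_subgrad:
  fixes g :: "'a::{real_vector,topological_space} \<Rightarrow> ereal"
  assumes tvs: "tvs TYPE('a)" and g: "proper_fun g" "convex_fun g" "lsc_fun g"
    and gx: "g x = ereal gx" and Lam: "\<Lambda> > 0"
    and seg: "\<And>l. l \<in> {0..\<Lambda>} \<Longrightarrow> ereal (gx - \<epsilon> + K * l) < g (x + l *\<^sub>R z)"
  shows "\<exists>\<phi>\<in>eps_subdiff \<epsilon> g x. K - \<epsilon> / \<Lambda> \<le> \<phi> z"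
proof -
  define E where "E = {(y, r::real). g y \<le> ereal r}"
  define \<sigma> where "\<sigma> l = (x + l *\<^sub>R z, gx - \<epsilon> + K * l)" for l
  define D where "D = {e - \<sigma> l | e l. e \<in> E \<and> l \<in> {0..\<Lambda>}}"
  have Ec: "convex E" unfolding E_def by (rule epi_convex[OF g(2)])
  have Ecl: "closed E" unfolding E_def by (rule epi_closed[OF g(3)])
  have \<sigma>aff: "a *\<^sub>R \<sigma> l1 + b *\<^sub>R \<sigma> l2 = \<sigma> (a * l1 + b * l2)" if "a + b = 1" for a b l1 l2
  proof -
    have "a *\<^sub>R \<sigma> l1 + b *\<^sub>R \<sigma> l2 = ((a + b) *\<^sub>R x + (a * l1 + b * l2) *\<^sub>R z, (a + b) * (gx - \<epsilon>) + K * (a * l1 + b * l2))"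
      unfolding \<sigma>_def by (simp add: algebra_simps)
    then show ?thesis using that unfolding \<sigma>_def by simp
  qed
  have Dc: "convex D"
    unfolding convex_def
  proof (intro ballI allI impI)
    fix d1 d2 :: "'a \<times> real" and a b :: real
    assume d: "d1 \<in> D" "d2 \<in> D" and ab: "0 \<le> a" "0 \<le> b" "a + b = 1"
    obtain e1 l1 where 1: "d1 = e1 - \<sigma> l1" "e1 \<in> E" "l1 \<in> {0..\<Lambda>}" using d(1) unfolding D_def by blast
    obtain e2 l2 where 2: "d2 = e2 - \<sigma> l2" "e2 \<in> E" "l2 \<in> {0..\<Lambda>}" using d(2) unfolding D_def by blast
    have "a *\<^sub>R e1 + b *\<^sub>R e2 \<in> E" using Ec 1 2 ab unfolding convex_def by blast
    moreover have "a * l1 + b * l2 \<in> {0..\<Lambda>}"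
    proof -
      have "a * l1 \<le> a * \<Lambda>" "b * l2 \<le> b * \<Lambda>" using 1 2 ab by (auto intro: mult_left_mono)
      then have "a * l1 + b * l2 \<le> (a + b) * \<Lambda>" by (simp add: algebra_simps)
      then show ?thesis using ab 1 2 by auto
    qed
    moreover have "a *\<^sub>R d1 + b *\<^sub>R d2 = (a *\<^sub>R e1 + b *\<^sub>R e2) - \<sigma> (a * l1 + b * l2)"
    proof -
      have "a *\<^sub>R d1 + b *\<^sub>R d2 = a *\<^sub>R (e1 - \<sigma> l1) + b *\<^sub>R (e2 - \<sigma> l2)" by (simp only: 1(1) 2(1))
      also have "\<dots> = (a *\<^sub>R e1 + b *\<^sub>R e2) - (a *\<^sub>R \<sigma> l1 + b *\<^sub>R \<sigma> l2)" by (simp add: algebra_simps)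
      finally show ?thesis using \<sigma>aff[OF ab(3), of l1 l2] by simp
    qed
    ultimately show "a *\<^sub>R d1 + b *\<^sub>R d2 \<in> D" unfolding D_def by blast
  qed
  have tvsP: "tvs TYPE('a \<times> real)" by (rule tvs_prod[OF tvs])
  have addP: "continuous_on UNIV (\<lambda>p::('a \<times> real) \<times> ('a \<times> real). fst p + snd p)"
    using tvsP unfolding tvs_def by blast
  have \<sigma>c: "continuous_on UNIV \<sigma>"
  proof -
    have "continuous_on UNIV ((\<lambda>v. x + v) \<circ> (\<lambda>l::real. l *\<^sub>R z))"
      by (rule continuous_on_compose[OF tvs_scale_var[OF tvs]]) (rule continuous_on_subset[OF tvs_add_const[OF tvs]], simp)
    then have "continuous_on UNIV (\<lambda>l::real. x + l *\<^sub>R z)" by (simp add: o_def)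
    moreover have "continuous_on UNIV (\<lambda>l::real. gx - \<epsilon> + K * l)" by (intro continuous_intros)
    ultimately show ?thesis unfolding \<sigma>_def by (rule continuous_on_Pair)
  qed
  define F where "F p = fst p + \<sigma> (snd p)" for p :: "('a \<times> real) \<times> real"
  have Fc: "continuous_on UNIV F"
  proof -
    have inner: "continuous_on UNIV (\<lambda>p::('a \<times> real) \<times> real. (fst p, \<sigma> (snd p)))"
    proof (rule continuous_on_Pair)
      show "continuous_on UNIV (\<lambda>p::('a \<times> real) \<times> real. fst p)" by (rule continuous_on_fst[OF continuous_on_id])
      have "continuous_on UNIV (\<sigma> \<circ> (\<lambda>p::('a \<times> real) \<times> real. snd p))"
        by (rule continuous_on_compose[OF continuous_on_snd[OF continuous_on_id]]) (rule continuous_on_subset[OF \<sigma>c], simp)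
      then show "continuous_on UNIV (\<lambda>p::('a \<times> real) \<times> real. \<sigma> (snd p))" by (simp add: o_def)
    qed
    have "continuous_on UNIV ((\<lambda>p::('a \<times> real) \<times> ('a \<times> real). fst p + snd p) \<circ> (\<lambda>p. (fst p, \<sigma> (snd p))))"
      by (rule continuous_on_compose[OF inner]) (rule continuous_on_subset[OF addP], simp)
    then show ?thesis unfolding F_def by (simp add: o_def)
  qed
  define W where "W = F -` (- E)"
  have Wo: "open W" unfolding W_def by (rule open_vimage_UNIV[OF Fc]) (use Ecl in \<open>simp add: closed_def\<close>)
  have "{0} \<times> {0..\<Lambda>} \<subseteq> W"
  proof
    fix q assume "q \<in> {0::'a \<times> real} \<times> {0..\<Lambda>}"
    then obtain l where q: "q = (0, l)" "l \<in> {0..\<Lambda>}" by auto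
    have "F q = \<sigma> l" unfolding F_def q by simp
    moreover have "\<sigma> l \<notin> E" using seg[OF q(2)] unfolding \<sigma>_def E_def by auto
    ultimately show "q \<in> W" unfolding W_def by simp
  qed
  from Elementary_Topology.tube_lemma[OF compact_Icc Wo this]
  obtain G where G: "0 \<in> G" "open G" "G \<times> {0..\<Lambda>} \<subseteq> W" by blast
  have GD: "G \<inter> D = {}"
  proof (rule ccontr)
    assume "G \<inter> D \<noteq> {}"
    then obtain e l where el: "e - \<sigma> l \<in> G" "e \<in> E" "l \<in> {0..\<Lambda>}" unfolding D_def by blast
    then have "(e - \<sigma> l, l) \<in> W" using G(3) by blast
    then have "F (e - \<sigma> l, l) \<notin> E" unfolding W_def by simp
    moreover have "F (e - \<sigma> l, l) = e" unfolding F_def by simp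
    ultimately show False using el(2) by simp
  qed
  obtain L :: "'a \<times> real \<Rightarrow> real" and \<delta> where L: "linear L" "continuous_on UNIV L" "\<delta> > 0"
      "\<And>d. d \<in> D \<Longrightarrow> L d + \<delta> \<le> L 0"
    using tvs_separation[OF tvsP Dc G(2) G(1) GD] by blast
  have L0: "L 0 = 0" using L(1) by (simp add: linear_0)
  define \<phi>0 where "\<phi>0 a = L (a, 0)" for a
  define \<beta> where "\<beta> = L (0, 1)"
  have Lsplit: "L (a, r) = \<phi>0 a + r * \<beta>" for a r
  proof -
    have e: "(a, r) = (a, 0) + r *\<^sub>R (0::'a, 1::real)" by simp
    have 1: "L ((a, 0) + r *\<^sub>R (0::'a, 1::real)) = L (a, 0) + L (r *\<^sub>R (0::'a, 1::real))" by (rule linear_add[OF L(1)])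
    have 2: "L (r *\<^sub>R (0::'a, 1::real)) = r * L (0, 1)" using linear_scale[OF L(1), of r "(0::'a, 1::real)"] by simp
    have "L (a, r) = L (a, 0) + r * L (0, 1)" by (subst e) (simp only: 1 2)
    then show ?thesis unfolding \<phi>0_def \<beta>_def by simp
  qed
  have key: "\<phi>0 (y - x - l *\<^sub>R z) + (r - (gx - \<epsilon> + K * l)) * \<beta> + \<delta> \<le> 0"
    if "g y \<le> ereal r" "l \<in> {0..\<Lambda>}" for y r l
  proof -
    have "(y, r) - \<sigma> l \<in> D" unfolding D_def E_def using that by blast
    then have "L ((y, r) - \<sigma> l) + \<delta> \<le> L 0" by (rule L(4))
    then have "L ((y, r) - \<sigma> l) + \<delta> \<le> 0" using L0 by simp
    moreover have "(y, r) - \<sigma> l = (y - x - l *\<^sub>R z, r - (gx - \<epsilon> + K * l))" unfolding \<sigma>_def by simp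
    ultimately show ?thesis using Lsplit by simp
  qed
  have \<beta>neg: "\<beta> < 0"
  proof -
    have "\<phi>0 (x - x - 0 *\<^sub>R z) + (gx - (gx - \<epsilon> + K * 0)) * \<beta> + \<delta> \<le> 0"
      by (rule key) (use gx Lam in auto)
    moreover have "\<phi>0 0 = 0" unfolding \<phi>0_def using L0 by (simp add: zero_prod_def)
    ultimately have "\<epsilon> * \<beta> < 0" using L(3) by simp
    moreover have "\<epsilon> \<ge> 0"
    proof (rule ccontr)
      assume "\<not> \<epsilon> \<ge> 0"
      then have "ereal (gx - \<epsilon> + K * 0) > g (x + 0 *\<^sub>R z)" using gx by simp
      then show False using seg[of 0] Lam by auto
    qed
    ultimately show ?thesis by (simp add: mult_less_0_iff)
  qed
  have \<phi>0lin: "linear \<phi>0"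
  proof (rule linearI)
    fix a b :: 'a and c :: real
    have "(a + b, 0::real) = (a, 0) + (b, 0)" by simp
    then show "\<phi>0 (a + b) = \<phi>0 a + \<phi>0 b" unfolding \<phi>0_def using linear_add[OF L(1), of "(a, 0)" "(b, 0)"] by simp
    have "(c *\<^sub>R a, 0::real) = c *\<^sub>R (a, 0)" by simp
    then show "\<phi>0 (c *\<^sub>R a) = c *\<^sub>R \<phi>0 a" unfolding \<phi>0_def using linear_scale[OF L(1), of c "(a, 0)"] by simp
  qed
  have \<phi>0c: "continuous_on UNIV \<phi>0"
  proof -
    have "continuous_on UNIV (L \<circ> (\<lambda>a::'a. (a, 0::real)))"
      by (rule continuous_on_compose) (auto intro!: continuous_intros intro: continuous_on_subset[OF L(2)])
    then show ?thesis unfolding \<phi>0_def by (simp add: o_def)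
  qed
  define \<psi> where "\<psi> a = \<phi>0 a / (- \<beta>)" for a
  have \<psi>dual: "\<psi> \<in> dual"
  proof -
    have "linear \<psi>" unfolding \<psi>_def using \<phi>0lin
      by (intro linearI) (auto simp: linear_add linear_scale add_divide_distrib)
    moreover have "continuous_on UNIV \<psi>" unfolding \<psi>_def by (intro continuous_intros \<phi>0c) (use \<beta>neg in auto)
    ultimately show ?thesis unfolding dual_def by simp
  qed
  have \<psi>lin: "linear \<psi>" using \<psi>dual unfolding dual_def by simp
  have ineq: "\<psi> (y - x) - l * \<psi> z \<le> r - gx + \<epsilon> - K * l" if "g y \<le> ereal r" "l \<in> {0..\<Lambda>}" for y r l
  proof -
    have k: "\<phi>0 (y - x - l *\<^sub>R z) + (r - (gx - \<epsilon> + K * l)) * \<beta> \<le> 0" using key[OF that] L(3) by simp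
    have "\<phi>0 (y - x - l *\<^sub>R z) = \<phi>0 (y - x) - l * \<phi>0 z" using \<phi>0lin by (simp add: linear_diff linear_scale)
    then have "\<phi>0 (y - x) - l * \<phi>0 z \<le> (r - (gx - \<epsilon> + K * l)) * (- \<beta>)" using k by simp
    moreover have bpos: "- \<beta> > 0" using \<beta>neg by simp
    ultimately have "(\<phi>0 (y - x) - l * \<phi>0 z) / (- \<beta>) \<le> r - (gx - \<epsilon> + K * l)"
      by (subst pos_divide_le_eq[OF bpos])
    then show ?thesis unfolding \<psi>_def using \<beta>neg by (simp add: diff_divide_distrib)
  qed
  have allY: "g x + ereal (\<psi> (y - x)) - ereal \<epsilon> \<le> g y" for y
  proof (cases "g y")
    case (real r)
    have "\<psi> (y - x) - 0 * \<psi> z \<le> r - gx + \<epsilon> - K * 0" by (rule ineq) (use real Lam in auto)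
    then show ?thesis using real gx by simp
  next
    case PInf then show ?thesis by simp
  next
    case MInf then show ?thesis using g(1) unfolding proper_fun_def by auto
  qed
  have sub: "\<psi> \<in> eps_subdiff \<epsilon> g x"
    unfolding eps_subdiff_def using gx \<psi>dual allY by simp
  have "\<psi> (x - x) - \<Lambda> * \<psi> z \<le> gx - gx + \<epsilon> - K * \<Lambda>" by (rule ineq) (use gx Lam in auto)
  then have "K * \<Lambda> - \<epsilon> \<le> \<Lambda> * \<psi> z" using \<psi>lin by (simp add: linear_0)
  then have "K - \<epsilon> / \<Lambda> \<le> \<psi> z" using Lam by (simp add: field_simps mult.commute)
  then show ?thesis using sub by blast
qed



lemma lookup_dist_le:
  fixes x y :: "'i \<Rightarrow>\<^sub>0 real"
  shows "\<bar>poly_mapping.lookup x i - poly_mapping.lookup y i\<bar> \<le> dist x y"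
proof (cases "i \<in> Poly_Mapping.keys x \<union> Poly_Mapping.keys y")
  case True
  have "dist x y = (\<Sum>n \<in> Poly_Mapping.keys x \<union> Poly_Mapping.keys y. dist (poly_mapping.lookup x n) (poly_mapping.lookup y n))"
    by (simp add: dist_poly_mapping_def)
  moreover have "dist (poly_mapping.lookup x i) (poly_mapping.lookup y i) \<le> (\<Sum>n \<in> Poly_Mapping.keys x \<union> Poly_Mapping.keys y. dist (poly_mapping.lookup x n) (poly_mapping.lookup y n))"
    by (rule member_le_sum) (use True in auto)
  ultimately show ?thesis by (simp add: dist_real_def)
next
  case False
  then have "poly_mapping.lookup x i = 0" "poly_mapping.lookup y i = 0" by (auto simp: in_keys_iff)
  then show ?thesis by simp
qed

lemma lookup_scaleR_pm: "poly_mapping.lookup (c *\<^sub>R (p :: 'i \<Rightarrow>\<^sub>0 real)) j = c * poly_mapping.lookup p j"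
proof -
  have "finite {i. c *\<^sub>R poly_mapping.lookup p i \<noteq> 0}"
    by (rule finite_subset[of _ "{i. poly_mapping.lookup p i \<noteq> 0}"]) auto
  then show ?thesis unfolding scaleR_poly_mapping_def by simp
qed

definition Pm :: "'i set \<Rightarrow> ('i \<Rightarrow> real) \<Rightarrow> ('i \<Rightarrow>\<^sub>0 real)" where
  "Pm Fs \<phi> = Abs_poly_mapping (\<lambda>i. if i \<in> Fs then \<phi> i else 0)"

lemma lookup_Pm: "finite Fs \<Longrightarrow> poly_mapping.lookup (Pm Fs \<phi>) j = (if j \<in> Fs then \<phi> j else 0)"
proof -
  assume "finite Fs"
  then have "finite {i. (if i \<in> Fs then \<phi> i else 0) \<noteq> 0}"
    by (rule finite_subset[rotated]) auto
  then show ?thesis unfolding Pm_def by simp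
qed

lemma Pm_sum: "finite Fs \<Longrightarrow> Pm Fs \<phi> = (\<Sum>i\<in>Fs. \<phi> i *\<^sub>R Poly_Mapping.single i 1)"
proof (rule poly_mapping_eqI)
  fix k assume Fs: "finite Fs"
  have 1: "(\<lambda>x. \<phi> x * (if x = k then 1 else 0)) = (\<lambda>x. if x = k then \<phi> k else 0)" by auto
  have 2: "(\<Sum>x\<in>Fs. \<phi> x * (if x = k then 1 else 0)) = (if k \<in> Fs then \<phi> k else 0)"
    unfolding 1 by (simp add: sum.delta[OF Fs])
  then show "poly_mapping.lookup (Pm Fs \<phi>) k = poly_mapping.lookup (\<Sum>i\<in>Fs. \<phi> i *\<^sub>R Poly_Mapping.single i 1) k"
    by (simp add: lookup_Pm[OF Fs] lookup_sum lookup_scaleR_pm lookup_single when_def 2)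
qed

lemma wstar_sep:
  fixes C :: "('a::{real_vector,topological_space} \<Rightarrow> real) set"
  assumes Cd: "C \<subseteq> dual" and Cc: "wstar_convex C" and Ccl: "closedin (subtopology euclidean dual) C"
    and \<psi>: "\<psi> \<in> dual" "\<psi> \<notin> C"
  shows "\<exists>w. \<exists>\<delta>>0. \<forall>\<phi>\<in>C. \<phi> w + \<delta> \<le> \<psi> w"
proof -
  obtain T where T: "closed T" "C = dual \<inter> T" using Ccl closedin_closed by blast
  have "\<psi> \<in> - T" using T \<psi> by auto
  moreover have "open (- T)" using T(1) by auto
  ultimately obtain X where X: "\<psi> \<in> (\<Pi>\<^sub>E i\<in>UNIV. X i)" "\<And>i. openin euclidean (X i)"
      "finite {i. X i \<noteq> topspace euclidean}" "(\<Pi>\<^sub>E i\<in>UNIV. X i) \<subseteq> - T"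
    using product_topology_open_contains_basis[of "\<lambda>i. euclidean" UNIV "- T" \<psi>] unfolding open_fun_def by auto
  define Fs where "Fs = {i. X i \<noteq> UNIV}"
  have Fs: "finite Fs" using X(3) unfolding Fs_def by simp
  have "\<forall>i\<in>Fs. \<exists>e>0. ball (\<psi> i) e \<subseteq> X i"
    using X(1,2) by (auto simp: open_contains_ball)
  then obtain e where e: "\<And>i. i \<in> Fs \<Longrightarrow> e i > 0 \<and> ball (\<psi> i) (e i) \<subseteq> X i" by metis
  define e0 where "e0 = (if Fs = {} then 1 else Min (e ` Fs))"
  have e0: "e0 > 0" unfolding e0_def using e Fs by auto
  have e0le: "e0 \<le> e i" if "i \<in> Fs" for i unfolding e0_def using that Fs by auto
  have notT: "\<phi> \<notin> T" if "\<And>i. i \<in> Fs \<Longrightarrow> \<bar>\<phi> i - \<psi> i\<bar> < e0" for \<phi>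
  proof -
    have "\<phi> i \<in> X i" for i
    proof (cases "i \<in> Fs")
      case True
      then have "\<phi> i \<in> ball (\<psi> i) (e i)" using that[OF True] e0le[OF True] by (simp add: dist_real_def abs_minus_commute)
      then show ?thesis using e[OF True] by auto
    next
      case False then show ?thesis unfolding Fs_def by auto
    qed
    then have "\<phi> \<in> (\<Pi>\<^sub>E i\<in>UNIV. X i)" by auto
    then show ?thesis using X(4) by auto
  qed
  define K where "K = Pm Fs ` C"
  have Kc: "convex K"
    unfolding convex_def K_def
  proof (intro ballI allI impI)
    fix p q :: "'a \<Rightarrow>\<^sub>0 real" and a b :: real
    assume pq: "p \<in> Pm Fs ` C" "q \<in> Pm Fs ` C" and ab: "0 \<le> a" "0 \<le> b" "a + b = 1"
    obtain u v where uv: "u \<in> C" "v \<in> C" "p = Pm Fs u" "q = Pm Fs v" using pq by auto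
    have "(\<lambda>x. a * u x + (1 - a) * v x) \<in> C" using Cc uv ab unfolding wstar_convex_def by auto
    moreover have "a *\<^sub>R p + b *\<^sub>R q = Pm Fs (\<lambda>x. a * u x + (1 - a) * v x)"
      using ab uv by (intro poly_mapping_eqI) (simp add: lookup_add lookup_scaleR_pm lookup_Pm[OF Fs])
    ultimately show "a *\<^sub>R p + b *\<^sub>R q \<in> Pm Fs ` C" by blast
  qed
  have disj: "ball (Pm Fs \<psi>) e0 \<inter> K = {}"
  proof (rule ccontr)
    assume "ball (Pm Fs \<psi>) e0 \<inter> K \<noteq> {}"
    then obtain \<phi> where \<phi>: "\<phi> \<in> C" "dist (Pm Fs \<psi>) (Pm Fs \<phi>) < e0" unfolding K_def by auto
    have "\<bar>\<phi> i - \<psi> i\<bar> < e0" if "i \<in> Fs" for i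
      using lookup_dist_le[where x="Pm Fs \<psi>" and y="Pm Fs \<phi>" and i=i] \<phi>(2) that by (simp add: lookup_Pm[OF Fs] abs_minus_commute)
    then have "\<phi> \<notin> T" by (rule notT)
    then show False using \<phi>(1) T(2) by auto
  qed
  obtain L :: "('a \<Rightarrow>\<^sub>0 real) \<Rightarrow> real" and \<delta> where L: "linear L" "\<delta> > 0" "\<And>k. k \<in> K \<Longrightarrow> L k + \<delta> \<le> L (Pm Fs \<psi>)"
    using tvs_separation[OF tvs_normed Kc open_ball centre_in_ball[THEN iffD2, OF e0] disj] by blast
  define w where "w = (\<Sum>i\<in>Fs. L (Poly_Mapping.single i 1) *\<^sub>R i)"
  have rep: "L (Pm Fs \<phi>) = \<phi> w" if "\<phi> \<in> dual" for \<phi>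
  proof -
    have lin: "linear \<phi>" using that unfolding dual_def by simp
    have "L (Pm Fs \<phi>) = (\<Sum>i\<in>Fs. \<phi> i * L (Poly_Mapping.single i 1))"
      unfolding Pm_sum[OF Fs] using L(1) by (simp add: linear_sum linear_scale)
    also have "\<dots> = \<phi> w" unfolding w_def using lin by (simp add: linear_sum linear_scale mult.commute)
    finally show ?thesis .
  qed
  have "\<forall>\<phi>\<in>C. \<phi> w + \<delta> \<le> \<psi> w"
  proof
    fix \<phi> assume "\<phi> \<in> C"
    then have "L (Pm Fs \<phi>) + \<delta> \<le> L (Pm Fs \<psi>)" using L(3) unfolding K_def by auto
    then show "\<phi> w + \<delta> \<le> \<psi> w" using rep \<psi>(1) Cd \<open>\<phi> \<in> C\<close> by auto
  qed
  then show ?thesis using L(2) by blast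
qed



lemma dual_lincomb:
  assumes u: "u \<in> dual" and v: "v \<in> dual"
  shows "(\<lambda>w. a * u w + b * v w) \<in> dual"
proof -
  have lu: "linear u" and lv: "linear v" and cu: "continuous_on UNIV u" and cv: "continuous_on UNIV v"
    using u v unfolding dual_def by auto
  have "linear (\<lambda>w. a * u w + b * v w)"
    by (rule linearI) (simp_all add: linear_add[OF lu] linear_add[OF lv] linear_scale[OF lu] linear_scale[OF lv] algebra_simps)
  moreover have "continuous_on UNIV (\<lambda>w. a * u w + b * v w)" by (intro continuous_intros cu cv)
  ultimately show ?thesis unfolding dual_def by simp
qed

lemma closed_eval_le: "closed {\<phi>::'a \<Rightarrow> real. \<phi> w \<le> c}"
  by (rule closed_Collect_le) (auto intro: continuous_on_product_coordinates)

lemma wstar_cco_sub: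
  assumes "C \<subseteq> dual" "S \<subseteq> C" "wstar_convex C" "closedin (subtopology euclidean dual) C"
  shows "wstar_cco S \<subseteq> C"
  using assms unfolding wstar_cco_def by blast

lemma wstar_cco_sup: "S \<subseteq> wstar_cco S"
  unfolding wstar_cco_def by blast

theorem corollary2:
  fixes \<tau> :: "'t topology"
    and ft :: "'t \<Rightarrow> 'a::{real_vector,topological_space} \<Rightarrow> ereal"
    and x :: 'a and \<epsilon> :: real
  assumes X: "separated_lcs TYPE('a)"
    and Tne: "topspace \<tau> \<noteq> {}"
    and fams: "\<And>t. t \<in> topspace \<tau> \<Longrightarrow> proper_fun (ft t) \<and> convex_fun (ft t) \<and> lsc_fun (ft t)"
    and SH_compact: "compact_space \<tau>" and SH_Hausdorff: "Hausdorff_space \<tau>"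
    and SH_usc: "\<And>z. \<forall>c::real. openin \<tau> {t \<in> topspace \<tau>. ft t z < ereal c}"
    and xdom: "x \<in> dom_fun (\<lambda>y. SUP t\<in>topspace \<tau>. ft t y)"
    and inf_fin: "(INF t\<in>topspace \<tau>. ft t x) > -\<infinity>"
    and eps: "\<epsilon> > 0"
  shows "normal_cone (dom_fun (\<lambda>y. SUP t\<in>topspace \<tau>. ft t y)) x =
         recession_cone (wstar_cco (\<Union>t\<in>topspace \<tau>. eps_subdiff \<epsilon> (ft t) x))"
proof -
  define T where "T = topspace \<tau>"
  define f where "f y = (SUP t\<in>T. ft t y)" for y
  define S where "S = (\<Union>t\<in>T. eps_subdiff \<epsilon> (ft t) x)"
  define C where "C = wstar_cco S"
  have tvs: "tvs TYPE('a)" by (rule tvs_from_lcs[OF X])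
  have ftp: "proper_fun (ft t)" "convex_fun (ft t)" "lsc_fun (ft t)" if "t \<in> T" for t
    using fams that unfolding T_def by auto
  have fge: "ft t y \<le> f y" if "t \<in> T" for t y unfolding f_def using that by (rule SUP_upper)
  have fx: "f x < \<infinity>" using xdom unfolding dom_fun_def f_def T_def by simp
  obtain t1 where t1: "t1 \<in> T" using Tne unfolding T_def by blast
  have "f x > -\<infinity>"
  proof -
    have "ft t1 x \<noteq> -\<infinity>" using ftp(1)[OF t1] unfolding proper_fun_def by auto
    then show ?thesis using fge[OF t1, of x] by (metis MInfty_neq_ereal(1) ereal_infty_less(2) ereal_less_eq(2) order_le_less_trans not_less)
  qed
  with fx obtain fxr where fxr: "f x = ereal fxr" by (cases "f x") auto
  have inf_fin': "(INF t\<in>T. ft t x) > -\<infinity>" using inf_fin unfolding T_def .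
  have "(INF t\<in>T. ft t x) \<le> ft t1 x" using t1 by (rule INF_lower)
  also have "\<dots> \<le> f x" by (rule fge[OF t1])
  finally have "(INF t\<in>T. ft t x) < \<infinity>" using fxr by auto
  with inf_fin' obtain mr where mr: "(INF t\<in>T. ft t x) = ereal mr" by (cases "(INF t\<in>T. ft t x)") auto
  have ftx: "\<exists>a. ft t x = ereal a \<and> mr \<le> a \<and> a \<le> fxr" if t: "t \<in> T" for t
  proof -
    have "ereal mr \<le> ft t x" using mr[symmetric] INF_lower[OF t, of "\<lambda>t. ft t x"] by simp
    moreover have "ft t x \<le> ereal fxr" using fge[OF t, of x] fxr by simp
    ultimately show ?thesis by (cases "ft t x") auto
  qed
  have Sd: "S \<subseteq> dual" unfolding S_def eps_subdiff_def by auto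
  have SC: "S \<subseteq> C" unfolding C_def by (rule wstar_cco_sup)
  obtain c0 where c0: "c0 \<in> S"
  proof -
    obtain a where a: "ft t1 x = ereal a" using ftx[OF t1] by blast
    have "\<exists>\<phi>\<in>eps_subdiff \<epsilon> (ft t1) x. 0 - \<epsilon> / 1 \<le> \<phi> 0"
      by (rule seg_subgrad[OF tvs ftp[OF t1] a]) (use a eps in auto)
    then show ?thesis using that t1 unfolding S_def by blast
  qed
  show ?thesis
    unfolding T_def[symmetric] f_def[symmetric] S_def[symmetric] C_def[symmetric]
  proof
    have dual_fam: "wstar_convex dual"
      unfolding wstar_convex_def using dual_lincomb by blast
    have dual_cl: "closedin (subtopology euclidean dual) dual"
      using closedin_topspace[of "subtopology euclidean dual"] by simp
    have Cd: "C \<subseteq> dual" unfolding C_def by (rule wstar_cco_sub[OF order_refl Sd dual_fam dual_cl])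
    show "recession_cone C \<subseteq> normal_cone (dom_fun f) x"
    proof
      fix d assume d: "d \<in> recession_cone C"
      have c0C: "c0 \<in> C" using c0 SC by auto
      have c0all: "\<forall>s::real. s \<ge> 0 \<longrightarrow> (\<lambda>w. c0 w + s * d w) \<in> C" using d c0C unfolding recession_cone_def by blast
      then have c0d: "(\<lambda>w. c0 w + 1 * d w) \<in> C" using zero_le_one by blast
      have "(\<lambda>w. 1 * (c0 w + 1 * d w) + (-1) * c0 w) \<in> dual"
        by (rule dual_lincomb) (use c0d c0C Cd in auto)
      moreover have "(\<lambda>w. 1 * (c0 w + 1 * d w) + (-1) * c0 w) = d" by auto
      ultimately have dd: "d \<in> dual" by simp
      define B where "B y = real_of_ereal (f y) - mr + \<epsilon>" for y
      define H where "H = {\<phi>\<in>dual. \<forall>y\<in>dom_fun f. \<phi> (y - x) \<le> B y}"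
      have SH: "S \<subseteq> H"
      proof
        fix \<phi> assume "\<phi> \<in> S"
        then obtain t where t: "t \<in> T" "\<phi> \<in> eps_subdiff \<epsilon> (ft t) x" unfolding S_def by blast
        obtain a where a: "ft t x = ereal a" "mr \<le> a" using ftx[OF t(1)] by blast
        have \<phi>d: "\<phi> \<in> dual" and \<phi>i: "\<And>y. ft t y \<ge> ft t x + ereal (\<phi> (y - x)) - ereal \<epsilon>"
          using t(2) a unfolding eps_subdiff_def by auto
        have "\<phi> (y - x) \<le> B y" if y: "y \<in> dom_fun f" for y
        proof -
          have "f y \<noteq> -\<infinity>"
          proof
            assume "f y = -\<infinity>"
            then have "ft t y = -\<infinity>" using fge[OF t(1), of y] by simp
            then show False using ftp(1)[OF t(1)] unfolding proper_fun_def by auto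
          qed
          moreover have "f y < \<infinity>" using y unfolding dom_fun_def by simp
          ultimately obtain b where b: "f y = ereal b" by (cases "f y") auto
          have "ereal a + ereal (\<phi> (y - x)) - ereal \<epsilon> \<le> ereal b"
            using \<phi>i[of y] a(1) fge[OF t(1), of y] b by (metis order_trans)
          then have "a + \<phi> (y - x) - \<epsilon> \<le> b" by simp
          then show ?thesis unfolding B_def using b a(2) by simp
        qed
        then show "\<phi> \<in> H" unfolding H_def using \<phi>d by blast
      qed
      have Hd: "H \<subseteq> dual" unfolding H_def by auto
      have Hc: "wstar_convex H"
        unfolding wstar_convex_def
      proof (intro ballI)
        fix u v and \<theta> :: real assume uv: "u \<in> H" "v \<in> H" and \<theta>: "\<theta> \<in> {0..1}"
        have "(\<lambda>x. \<theta> * u x + (1 - \<theta>) * v x) \<in> dual" by (rule dual_lincomb) (use uv Hd in auto)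
        moreover have "\<theta> * u (y - x) + (1 - \<theta>) * v (y - x) \<le> B y" if "y \<in> dom_fun f" for y
        proof -
          have "u (y - x) \<le> B y" "v (y - x) \<le> B y" using uv that unfolding H_def by auto
          then have "\<theta> * u (y - x) \<le> \<theta> * B y" "(1 - \<theta>) * v (y - x) \<le> (1 - \<theta>) * B y"
            using \<theta> by (auto intro: mult_left_mono)
          then show ?thesis by (simp add: algebra_simps)
        qed
        ultimately show "(\<lambda>x. \<theta> * u x + (1 - \<theta>) * v x) \<in> H" unfolding H_def by auto
      qed
      have Hcl: "closedin (subtopology euclidean dual) H"
      proof -
        have "H = dual \<inter> (\<Inter>y\<in>dom_fun f. {\<phi>. \<phi> (y - x) \<le> B y})" unfolding H_def by auto
        moreover have "closed (\<Inter>y\<in>dom_fun f. {\<phi>::'a \<Rightarrow> real. \<phi> (y - x) \<le> B y})"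
          by (intro closed_INT ballI closed_eval_le)
        ultimately show ?thesis by (simp add: closedin_closed_Int)
      qed
      have CH: "C \<subseteq> H" unfolding C_def by (rule wstar_cco_sub[OF Hd SH Hc Hcl])
      have "d (y - x) \<le> 0" if y: "y \<in> dom_fun f" for y
      proof (rule ccontr)
        assume "\<not> d (y - x) \<le> 0"
        then have dpos: "d (y - x) > 0" by simp
        have c0H: "c0 (y - x) \<le> B y" using CH c0C y unfolding H_def by auto
        define s where "s = (B y - c0 (y - x) + 1) / d (y - x)"
        have s0: "s \<ge> 0" unfolding s_def using c0H dpos by simp
        have "(\<lambda>w. c0 w + s * d w) \<in> C" using c0all s0 by blast
        then have "c0 (y - x) + s * d (y - x) \<le> B y" using CH y unfolding H_def by auto
        moreover have "s * d (y - x) = B y - c0 (y - x) + 1" unfolding s_def using dpos by simp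
        ultimately show False by simp
      qed
      then show "d \<in> normal_cone (dom_fun f) x" unfolding normal_cone_def using dd by auto
    qed
    show "normal_cone (dom_fun f) x \<subseteq> recession_cone C"
    proof
      fix d assume d: "d \<in> normal_cone (dom_fun f) x"
      then have dd: "d \<in> dual" and dN: "\<And>y. y \<in> dom_fun f \<Longrightarrow> d (y - x) \<le> 0"
        unfolding normal_cone_def by auto
      have "(\<lambda>w. c w + s * d w) \<in> C" if c: "c \<in> C" and s: "s \<ge> 0" for c s
      proof (rule ccontr)
        assume nC: "(\<lambda>w. c w + s * d w) \<notin> C"
        then obtain C' where C': "C' \<subseteq> dual" "S \<subseteq> C'" "wstar_convex C'"
            "closedin (subtopology euclidean dual) C'" "(\<lambda>w. c w + s * d w) \<notin> C'"
          unfolding C_def wstar_cco_def by blast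
        have cC': "c \<in> C'" using c C' unfolding C_def wstar_cco_def by blast
        have "(\<lambda>w. 1 * c w + s * d w) \<in> dual" by (rule dual_lincomb) (use cC' C'(1) dd in auto)
        then have \<psi>d: "(\<lambda>w. c w + s * d w) \<in> dual" by simp
        obtain z \<delta> where z\<delta>: "\<delta> > 0" "\<And>\<phi>. \<phi> \<in> C' \<Longrightarrow> \<phi> z + \<delta> \<le> c z + s * d z"
          using wstar_sep[OF C'(1,3,4) \<psi>d C'(5)] by auto
        have "c z + \<delta> \<le> c z + s * d z" using z\<delta>(2)[OF cC'] .
        then have dz: "d z > 0"
        proof -
          assume h: "c z + \<delta> \<le> c z + s * d z"
          show "d z > 0"
          proof (rule ccontr)
            assume "\<not> d z > 0"
            then have "s * d z \<le> 0" using s by (simp add: mult_nonneg_nonpos)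
            then show False using h z\<delta>(1) by simp
          qed
        qed
        define K where "K = c z + s * d z + 1"
        have "\<exists>t0\<in>T. \<forall>l>0. ereal (fxr + K * l) \<le> ft t0 (x + l *\<^sub>R z)"
        proof (rule ccontr)
          assume "\<not> (\<exists>t0\<in>T. \<forall>l>0. ereal (fxr + K * l) \<le> ft t0 (x + l *\<^sub>R z))"
          then have cov: "\<forall>t\<in>T. \<exists>l>0. ft t (x + l *\<^sub>R z) < ereal (fxr + K * l)" by (auto simp: not_le)
          define Ol where "Ol l = {t \<in> T. ft t (x + l *\<^sub>R z) < ereal (fxr + K * l)}" for l
          have opn: "openin \<tau> (Ol l)" for l unfolding Ol_def T_def using SH_usc by blast
          have cpt: "compactin \<tau> T" using SH_compact unfolding compact_space_def T_def .
          have "T \<subseteq> \<Union>(Ol ` {0<..})" using cov unfolding Ol_def by fastforce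
          moreover have "\<forall>U\<in>Ol ` {0<..}. openin \<tau> U" using opn by blast
          ultimately obtain F where F: "finite F" "F \<subseteq> Ol ` {0<..}" "T \<subseteq> \<Union>F"
            using cpt unfolding compactin_def by meson
          obtain Ls where Ls: "Ls \<subseteq> {0<..}" "finite Ls" "F = Ol ` Ls"
            using finite_subset_image[OF F(1) F(2)] by blast
          have Lsne: "Ls \<noteq> {}" using F(3) Ls(3) t1 by auto
          define lm where "lm = Min Ls"
          have lm0: "lm > 0" unfolding lm_def using Ls Lsne by auto
          have lmle: "lm \<le> l" if "l \<in> Ls" for l unfolding lm_def using Ls(2) that by simp
          have bnd: "ft t (x + lm *\<^sub>R z) \<le> ereal (fxr + K * lm)" if t: "t \<in> T" for t
          proof -
            obtain l where l: "l \<in> Ls" "t \<in> Ol l" using F(3) Ls(3) t by auto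
            have l0: "l > 0" using l(1) Ls(1) by auto
            define \<theta> where "\<theta> = lm / l"
            have \<theta>: "0 \<le> \<theta>" "\<theta> \<le> 1" "\<theta> * l = lm"
              unfolding \<theta>_def using l0 lm0 lmle[OF l(1)] by auto
            have pt: "x + lm *\<^sub>R z = \<theta> *\<^sub>R (x + l *\<^sub>R z) + (1 - \<theta>) *\<^sub>R x"
            proof -
              have "\<theta> *\<^sub>R (x + l *\<^sub>R z) + (1 - \<theta>) *\<^sub>R x = x + (\<theta> * l) *\<^sub>R z"
                by (simp add: algebra_simps)
              then show ?thesis using \<theta>(3) by simp
            qed
            have "ft t (x + lm *\<^sub>R z) \<le> ereal \<theta> * ft t (x + l *\<^sub>R z) + ereal (1 - \<theta>) * ft t x"
              using ftp(2)[OF t] \<theta> unfolding pt convex_fun_def by auto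
            also have "\<dots> \<le> ereal \<theta> * ereal (fxr + K * l) + ereal (1 - \<theta>) * ereal fxr"
            proof (intro add_mono ereal_mult_left_mono)
              show "ft t (x + l *\<^sub>R z) \<le> ereal (fxr + K * l)" using l(2) unfolding Ol_def by auto
              show "ft t x \<le> ereal fxr" using fge[OF t, of x] fxr by simp
            qed (use \<theta> in auto)
            also have "\<dots> = ereal (fxr + K * lm)"
            proof -
              have "\<theta> * (fxr + K * l) + (1 - \<theta>) * fxr = fxr + K * (\<theta> * l)" by (simp add: algebra_simps)
              then show ?thesis using \<theta>(3) by simp
            qed
            finally show ?thesis .
          qed
          have "f (x + lm *\<^sub>R z) \<le> ereal (fxr + K * lm)" unfolding f_def by (rule SUP_least) (rule bnd)
          then have "x + lm *\<^sub>R z \<in> dom_fun f" unfolding dom_fun_def by (auto intro: le_less_trans)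
          then have "d (x + lm *\<^sub>R z - x) \<le> 0" by (rule dN)
          moreover have "d (x + lm *\<^sub>R z - x) = lm * d z" using dd unfolding dual_def by (simp add: linear_scale)
          ultimately show False using lm0 dz by (simp add: mult_le_0_iff)
        qed
        then obtain t0 where t0: "t0 \<in> T" "\<And>l. l > 0 \<Longrightarrow> ereal (fxr + K * l) \<le> ft t0 (x + l *\<^sub>R z)" by blast
        obtain a where a: "ft t0 x = ereal a" "a \<le> fxr" using ftx[OF t0(1)] by blast
        have "\<exists>\<phi>\<in>eps_subdiff \<epsilon> (ft t0) x. K - \<epsilon> / \<epsilon> \<le> \<phi> z"
        proof (rule seg_subgrad[OF tvs ftp[OF t0(1)] a(1) eps])
          fix l assume l: "l \<in> {0..\<epsilon>}"
          show "ereal (a - \<epsilon> + K * l) < ft t0 (x + l *\<^sub>R z)"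
          proof (cases "l = 0")
            case True then show ?thesis using a eps by simp
          next
            case False then have "l > 0" using l by simp
            then have "ereal (fxr + K * l) \<le> ft t0 (x + l *\<^sub>R z)" by (rule t0(2))
            moreover have "ereal (a - \<epsilon> + K * l) < ereal (fxr + K * l)" using a(2) eps by simp
            ultimately show ?thesis by (meson less_le_trans)
          qed
        qed
        then obtain \<phi> where \<phi>: "\<phi> \<in> eps_subdiff \<epsilon> (ft t0) x" "K - 1 \<le> \<phi> z" using eps by auto
        have "\<phi> \<in> C'" using \<phi>(1) t0(1) C'(2) unfolding S_def by blast
        then have "\<phi> z + \<delta> \<le> c z + s * d z" by (rule z\<delta>(2))
        then show False using \<phi>(2) z\<delta>(1) unfolding K_def by simp
      qed
      then show "d \<in> recession_cone C" unfolding recession_cone_def by auto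
    qed
  qed
qed


end
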